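(* There is an absolute constant $c>0$ such that for every (nondegenerate) hyperbolic triangle $T$ with height $h$, the area of $T$ is at least $c\cdot\min(1,h^2)$.
   Context: The hyperbolic plane is the complete simply connected Riemannian surface of constant curvature $-1$. The height of a hyperbolic triangle is the minimum, over its three vertices, of the hyperbolic distance from the vertex to the opposite side. *)

theory Defs
  imports "HOL-Analysis.Analysis"
begin

text \<open>The hyperbolic plane (curvature -1) in the Beltrami--Klein model:
  points are the open unit disk of the Euclidean plane (here identified with complex),
  geodesics are Euclidean chords, so geodesic segments are Euclidean segments and
  the (closed) triangle with vertices a b c is the Euclidean convex hull of {a,b,c}.\<close>

definition hyp_plane :: "complex set" where
  "hyp_plane = ball 0 1"

definition hdist :: "complex \<Rightarrow> complex \<Rightarrow> real" where
  "hdist p q = arcosh ((1 - p \<bullet> q) / sqrt ((1 - (norm p)\<^sup>2) * (1 - (norm q)\<^sup>2)))"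

definition hdist_set :: "complex \<Rightarrow> complex set \<Rightarrow> real" where
  "hdist_set p S = Inf (hdist p ` S)"

text \<open>Riemannian area of a region: the Klein metric has area density (1-|x|^2)^(-3/2)
  with respect to Lebesgue measure.\<close>
definition hyp_area :: "complex set \<Rightarrow> real" where
  "hyp_area S = integral S (\<lambda>x. 1 / ((1 - (norm x)\<^sup>2) powr (3/2)))"

definition hyp_triangle :: "complex \<Rightarrow> complex \<Rightarrow> complex \<Rightarrow> complex set" where
  "hyp_triangle a b c = convex hull {a, b, c}"

definition hyp_height :: "complex \<Rightarrow> complex \<Rightarrow> complex \<Rightarrow> real" where
  "hyp_height a b c = min (hdist_set a (closed_segment b c))
                        (min (hdist_set b (closed_segment a c)) (hdist_set c (closed_segment a b)))"

end

theory Submission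
  imports Defs
begin

definition e2c :: "real^2 \<Rightarrow> complex" where "e2c v = Complex (v$1) (v$2)"
definition c2e :: "complex \<Rightarrow> real^2" where "c2e z = vector [Re z, Im z]"

lemma c2e_e2c[simp]: "c2e (e2c v) = v"
  by (simp add: c2e_def e2c_def vec_eq_iff forall_2 vector_2)
lemma e2c_c2e[simp]: "e2c (c2e z) = z"
  by (simp add: c2e_def e2c_def vector_2 complex_eq_iff)
lemma c2e_comp[simp]: "c2e z $ 1 = Re z" "c2e z $ 2 = Im z"
  by (simp_all add: c2e_def vector_2)
lemma e2c_comp[simp]: "Re (e2c v) = v$1" "Im (e2c v) = v$2"
  by (simp_all add: e2c_def)

lemma linear_e2c: "linear e2c"
  by (rule linearI) (simp_all add: e2c_def complex_eq_iff)
lemma linear_c2e: "linear c2e"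
  by (rule linearI) (simp_all add: vec_eq_iff forall_2)

lemma e2c_cbox: "e2c ` cbox u v = cbox (e2c u) (e2c v)"
proof
  show "e2c ` cbox u v \<subseteq> cbox (e2c u) (e2c v)"
    by (auto simp: in_cbox_complex_iff mem_box_cart forall_2)
  show "cbox (e2c u) (e2c v) \<subseteq> e2c ` cbox u v"
  proof
    fix z assume "z \<in> cbox (e2c u) (e2c v)"
    then have "c2e z \<in> cbox u v" by (auto simp: in_cbox_complex_iff mem_box_cart forall_2)
    then show "z \<in> e2c ` cbox u v" by (metis e2c_c2e image_eqI)
  qed
qed

lemma c2e_cbox: "c2e ` cbox u v = cbox (c2e u) (c2e v)"
proof
  show "c2e ` cbox u v \<subseteq> cbox (c2e u) (c2e v)"
    by (auto simp: in_cbox_complex_iff mem_box_cart forall_2)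
  show "cbox (c2e u) (c2e v) \<subseteq> c2e ` cbox u v"
  proof
    fix z assume "z \<in> cbox (c2e u) (c2e v)"
    then have "e2c z \<in> cbox u v" by (auto simp: in_cbox_complex_iff mem_box_cart forall_2)
    then show "z \<in> c2e ` cbox u v" by (metis c2e_e2c image_eqI)
  qed
qed

lemma content_complex_cbox:
  "Henstock_Kurzweil_Integration.content (cbox a b) = (if Re a \<le> Re b \<and> Im a \<le> Im b then (Re b - Re a) * (Im b - Im a) else 0)"
  by (simp add: content_cbox_cases Basis_complex_def)

lemma content_cart2_cbox:
  "Henstock_Kurzweil_Integration.content (cbox (a::real^2) b) = (if a$1 \<le> b$1 \<and> a$2 \<le> b$2 then (b$1 - a$1) * (b$2 - a$2) else 0)"
proof -
  have "cbox a b = {} \<longleftrightarrow> \<not> (a$1 \<le> b$1 \<and> a$2 \<le> b$2)"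
    using interval_ne_empty_cart(1)[of a b] by (auto simp: forall_2)
  then show ?thesis by (simp add: content_cbox_if_cart UNIV_2)
qed

lemma content_e2c: "Henstock_Kurzweil_Integration.content (e2c ` cbox u v) = 1 * Henstock_Kurzweil_Integration.content (cbox u v)"
  by (simp add: e2c_cbox content_complex_cbox content_cart2_cbox)
lemma content_c2e: "Henstock_Kurzweil_Integration.content (c2e ` cbox u v) = 1 * Henstock_Kurzweil_Integration.content (cbox u v)"
  by (simp add: c2e_cbox content_complex_cbox content_cart2_cbox)

lemma has_integral_c2e:
  fixes f :: "complex \<Rightarrow> real"
  assumes "bounded S" "(f has_integral i) S"
  shows "((\<lambda>v. f (e2c v)) has_integral i) (c2e ` S)"
proof -
  obtain r where r: "S \<subseteq> cbox (-r) r" using assms(1) bounded_subset_cbox_symmetric by blast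
  let ?fS = "\<lambda>z. if z \<in> S then f z else 0"
  have "(?fS has_integral i) (cbox (-r) r)" using assms(2) r by simp
  then have "((\<lambda>v. ?fS (e2c v)) has_integral (1/1) *\<^sub>R i) (c2e ` cbox (-r) r)"
    apply (rule has_integral_twiddle[where g=e2c and h=c2e and r=1, rotated -1])
    using linear_e2c linear_continuous_at[of e2c] linear_conv_bounded_linear e2c_cbox c2e_cbox content_e2c by auto
  moreover have "e2c v \<in> S \<longleftrightarrow> v \<in> c2e ` S" for v
    by (metis c2e_e2c e2c_c2e imageE imageI)
  then have "(\<lambda>v. ?fS (e2c v)) = (\<lambda>v. if v \<in> c2e ` S then f (e2c v) else 0)"
    by presburger
  moreover have "c2e ` S \<subseteq> c2e ` cbox (-r) r" using r by auto
  ultimately show ?thesis by simp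
qed

lemma has_integral_e2c:
  fixes f :: "real^2 \<Rightarrow> real"
  assumes "bounded S" "(f has_integral i) S"
  shows "((\<lambda>v. f (c2e v)) has_integral i) (e2c ` S)"
proof -
  obtain r where r: "S \<subseteq> cbox (-r) r" using assms(1) bounded_subset_cbox_symmetric by blast
  let ?fS = "\<lambda>z. if z \<in> S then f z else 0"
  have "(?fS has_integral i) (cbox (-r) r)" using assms(2) r by simp
  then have "((\<lambda>v. ?fS (c2e v)) has_integral (1/1) *\<^sub>R i) (e2c ` cbox (-r) r)"
    apply (rule has_integral_twiddle[where g=c2e and h=e2c and r=1, rotated -1])
    using linear_c2e linear_continuous_at[of c2e] linear_conv_bounded_linear e2c_cbox c2e_cbox content_c2e by auto
  moreover have "c2e v \<in> S \<longleftrightarrow> v \<in> e2c ` S" for v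
    by (metis c2e_e2c e2c_c2e imageE imageI)
  then have "(\<lambda>v. ?fS (c2e v)) = (\<lambda>v. if v \<in> e2c ` S then f (c2e v) else 0)"
    by presburger
  moreover have "e2c ` S \<subseteq> e2c ` cbox (-r) r" using r by auto
  ultimately show ?thesis by simp
qed

lemma integral_c2e:
  fixes f :: "complex \<Rightarrow> real"
  assumes "bounded S"
  shows "integral (c2e ` S) (\<lambda>v. f (e2c v)) = integral S f"
proof (cases "f integrable_on S")
  case True
  then show ?thesis using has_integral_c2e[OF assms] by (simp add: has_integral_iff)
next
  case False
  have "\<not> (\<lambda>v. f (e2c v)) integrable_on (c2e ` S)"
  proof
    assume "(\<lambda>v. f (e2c v)) integrable_on (c2e ` S)"
    then obtain j where "((\<lambda>v. f (e2c v)) has_integral j) (c2e ` S)" by blast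
    moreover have "bounded (c2e ` S)" using assms linear_c2e
      by (simp add: bounded_linear_image linear_conv_bounded_linear)
    ultimately have "((\<lambda>v. f (e2c (c2e v))) has_integral j) (e2c ` c2e ` S)"
      by (rule has_integral_e2c[rotated])
    then have "(f has_integral j) S" by (simp add: image_image)
    with False show False by blast
  qed
  with False show ?thesis by (simp add: not_integrable_integral)
qed

lemma cont_compact_integrable:
  fixes f :: "'a::euclidean_space \<Rightarrow> 'b::euclidean_space"
  assumes "compact S" "continuous_on S f"
  shows "f integrable_on S"
proof -
  have "integrable lborel (\<lambda>x. indicator S x *\<^sub>R f x)"
    by (rule borel_integrable_compact[OF assms])
  then have "(\<lambda>x. indicator S x *\<^sub>R f x) integrable_on UNIV" by (rule integrable_on_lborel)
  moreover have "(\<lambda>x. indicator S x *\<^sub>R f x) = (\<lambda>x. if x \<in> S then f x else 0)"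
    by (auto simp: indicator_def)
  ultimately show ?thesis by (simp add: integrable_restrict_UNIV)
qed

lemma cont_compact_abs_integrable:
  fixes f :: "'a::euclidean_space \<Rightarrow> 'b::euclidean_space"
  assumes "compact S" "continuous_on S f"
  shows "f absolutely_integrable_on S"
  unfolding absolutely_integrable_on_def
  using assms by (auto intro!: cont_compact_integrable continuous_on_norm)

lemma bl_vec: "bounded_linear (vec :: real \<Rightarrow> real^1)"
  unfolding linear_conv_bounded_linear[symmetric] by (rule linearI) (simp_all add: vec_eq_iff)

definition jac :: "(complex \<Rightarrow> complex) \<Rightarrow> real" where
  "jac L = Re (L 1) * Im (L \<i>) - Re (L \<i>) * Im (L 1)"

lemma e2c_axis: "e2c (axis 1 1) = 1" "e2c (axis 2 1) = \<i>"
  by (simp_all add: e2c_def axis_def complex_eq_iff)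

lemma det_matrix_jac: "det (matrix (c2e \<circ> L \<circ> e2c)) = jac L"
  by (simp add: det_2 matrix_def e2c_axis jac_def)

lemma cv_complex:
  fixes \<Phi> :: "complex \<Rightarrow> complex" and D :: "complex \<Rightarrow> complex \<Rightarrow> complex"
    and f g :: "complex \<Rightarrow> real"
  assumes S: "compact S"
    and der: "\<And>z. z \<in> S \<Longrightarrow> (\<Phi> has_derivative D z) (at z within S)"
    and inj: "inj_on \<Phi> S"
    and eq: "\<And>z. z \<in> S \<Longrightarrow> \<bar>jac (D z)\<bar> * f (\<Phi> z) = g z"
    and gc: "continuous_on S g"
  shows "integral (\<Phi> ` S) f = integral S g"
proof -
  define S' where "S' = c2e ` S"
  define G where "G = c2e \<circ> \<Phi> \<circ> e2c"
  define G' where "G' = (\<lambda>v. c2e \<circ> D (e2c v) \<circ> e2c)"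
  define F where "F = (\<lambda>v. vec (f (e2c v)) :: real^1)"
  have lc: "linear c2e" "linear e2c" by (rule linear_c2e, rule linear_e2c)
  have bl: "bounded_linear c2e" "bounded_linear e2c" using lc linear_conv_bounded_linear by auto
  have cS': "compact S'" unfolding S'_def
    by (rule compact_continuous_image[OF _ S]) (simp add: bl linear_continuous_on)
  have e2cS': "e2c ` S' = S" unfolding S'_def by (simp add: image_image)
  have S'leb: "S' \<in> sets lebesgue"
    using cS' lebesgue_closedin[of UNIV S'] by (simp add: compact_imp_closed)
  have derG: "(G has_derivative G' v) (at v within S')" if "v \<in> S'" for v
  proof -
    have "e2c v \<in> S" using that e2cS' by auto
    have "(e2c has_derivative e2c) (at v within S')" by (rule linear_imp_has_derivative[OF lc(2)])
    moreover have "(\<Phi> has_derivative D (e2c v)) (at (e2c v) within e2c ` S')"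
      using der[OF \<open>e2c v \<in> S\<close>] e2cS' by simp
    ultimately have "(\<Phi> \<circ> e2c has_derivative D (e2c v) \<circ> e2c) (at v within S')"
      by (rule diff_chain_within)
    moreover have "(c2e has_derivative c2e) (at ((\<Phi> \<circ> e2c) v) within (\<Phi> \<circ> e2c) ` S')"
      by (rule linear_imp_has_derivative[OF lc(1)])
    ultimately have "(c2e \<circ> (\<Phi> \<circ> e2c) has_derivative c2e \<circ> (D (e2c v) \<circ> e2c)) (at v within S')"
      by (rule diff_chain_within)
    then show ?thesis by (simp add: G_def G'_def o_assoc)
  qed
  have injG: "inj_on G S'"
    using inj unfolding G_def S'_def inj_on_def by (auto) (metis e2c_c2e)
  have GS': "G ` S' = c2e ` (\<Phi> ` S)" unfolding G_def S'_def by (auto simp: image_image)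
  have eqG: "\<bar>det (matrix (G' v))\<bar> *\<^sub>R F (G v) = vec (g (e2c v))" if "v \<in> S'" for v
  proof -
    have "e2c v \<in> S" using that e2cS' by auto
    have "det (matrix (G' v)) = jac (D (e2c v))"
      unfolding G'_def by (rule det_matrix_jac)
    moreover have "F (G v) = vec (f (\<Phi> (e2c v)))" by (simp add: F_def G_def)
    ultimately have "\<bar>det (matrix (G' v))\<bar> *\<^sub>R F (G v) = vec (\<bar>jac (D (e2c v))\<bar> * f (\<Phi> (e2c v)))"
      by (simp add: vec_eq_iff)
    then show ?thesis using eq[OF \<open>e2c v \<in> S\<close>] by simp
  qed
  have gc': "continuous_on S' (\<lambda>v. vec (g (e2c v)) :: real^1)"
  proof -
    have "continuous_on S' (g \<circ> e2c)"
      by (rule continuous_on_compose) (auto simp: e2cS' gc bl linear_continuous_on)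
    then show ?thesis
      by (intro continuous_on_compose2[of UNIV vec, where f="g \<circ> e2c", simplified])
         (auto simp: bl_vec linear_continuous_on)
  qed
  have ai: "(\<lambda>v. vec (g (e2c v)) :: real^1) absolutely_integrable_on S'"
    by (rule cont_compact_abs_integrable[OF cS' gc'])
  define b where "b = integral S' (\<lambda>v. vec (g (e2c v)) :: real^1)"
  have "(\<lambda>x. \<bar>det (matrix (G' x))\<bar> *\<^sub>R F (G x)) absolutely_integrable_on S' \<and>
        integral S' (\<lambda>x. \<bar>det (matrix (G' x))\<bar> *\<^sub>R F (G x)) = b"
  proof
    show "(\<lambda>x. \<bar>det (matrix (G' x))\<bar> *\<^sub>R F (G x)) absolutely_integrable_on S'"
      using ai by (rule absolutely_integrable_spike[OF _ negligible_empty]) (simp add: eqG)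
    show "integral S' (\<lambda>x. \<bar>det (matrix (G' x))\<bar> *\<^sub>R F (G x)) = b"
      unfolding b_def by (rule integral_cong) (simp add: eqG)
  qed
  then have cv: "F absolutely_integrable_on G ` S' \<and> integral (G ` S') F = b"
    using has_absolute_integral_change_of_variables[OF S'leb derG injG] by blast
  have gc2: "continuous_on S' (\<lambda>v. g (e2c v))"
    using continuous_on_compose[of S' e2c g] linear_continuous_on[OF bl(2)] e2cS' gc by (simp add: o_def)
  have gi: "(\<lambda>v. g (e2c v)) integrable_on S'"
    by (rule cont_compact_integrable[OF cS' gc2])
  have Fi: "(\<lambda>v. f (e2c v)) integrable_on G ` S'"
  proof -
    have "F integrable_on G ` S'" using cv set_lebesgue_integral_eq_integral(1) by blast
    then have "((\<lambda>x. x $ 1) \<circ> F) integrable_on G ` S'" by (rule integrable_linear) auto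
    then show ?thesis by (simp add: F_def o_def)
  qed
  have "vec (integral (G ` S') (\<lambda>v. f (e2c v))) = b"
    using cv integral_linear[OF Fi bl_vec] by (simp add: F_def o_def)
  moreover have "b = vec (integral S' (\<lambda>v. g (e2c v)))"
    unfolding b_def using integral_linear[OF gi bl_vec] by (simp add: o_def)
  ultimately have "integral (G ` S') (\<lambda>v. f (e2c v)) = integral S' (\<lambda>v. g (e2c v))"
    by (simp add: vec_eq_iff)
  moreover have "integral (G ` S') (\<lambda>v. f (e2c v)) = integral (\<Phi> ` S) f"
  proof -
    have "continuous_on S \<Phi>"
      using der has_derivative_continuous continuous_on_eq_continuous_within by blast
    then have "bounded (\<Phi> ` S)" using S compact_continuous_image compact_imp_bounded by blast
    then show ?thesis unfolding GS' by (rule integral_c2e)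
  qed
  moreover have "integral S' (\<lambda>v. g (e2c v)) = integral S g"
    unfolding S'_def by (rule integral_c2e[OF compact_imp_bounded[OF S]])
  ultimately show ?thesis by simp
qed

definition Kf :: "complex \<Rightarrow> complex \<Rightarrow> real" where
  "Kf p q = (1 - p \<bullet> q) / sqrt ((1 - (norm p)\<^sup>2) * (1 - (norm q)\<^sup>2))"

lemma hdist_Kf: "hdist p q = arcosh (Kf p q)"
  by (simp add: hdist_def Kf_def)

definition rho :: "complex \<Rightarrow> real" where
  "rho x = 1 / ((1 - (norm x)\<^sup>2) powr (3/2))"

lemma hyp_area_rho: "hyp_area S = integral S rho"
  by (simp add: hyp_area_def rho_def[abs_def])

lemma disk_iff: "z \<in> hyp_plane \<longleftrightarrow> norm z < 1"
  by (simp add: hyp_plane_def)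

lemma powr32: "x > 0 \<Longrightarrow> x powr (3/2) = x * sqrt x"
proof -
  assume "x > 0"
  have "x powr (3/2) = x powr (1 + 1/2)" by simp
  also have "\<dots> = x powr 1 * x powr (1/2)" by (rule powr_add)
  also have "\<dots> = x * sqrt x" using \<open>x > 0\<close> by (simp add: powr_half_sqrt)
  finally show ?thesis .
qed

lemma rho_alt: "norm x < 1 \<Longrightarrow> rho x = 1 / ((1 - (norm x)\<^sup>2) * sqrt (1 - (norm x)\<^sup>2))"
proof -
  assume "norm x < 1"
  then have "(norm x)\<^sup>2 < 1" by (simp add: abs_square_less_1)
  then show ?thesis by (simp add: rho_def powr32)
qed

lemma norm_sq_complex: "(norm z)\<^sup>2 = (Re z)\<^sup>2 + (Im z)\<^sup>2"
  by (simp add: cmod_def)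

lemma cont_rho: "continuous_on hyp_plane rho"
proof -
  have "continuous_on hyp_plane (\<lambda>x. 1 / ((1 - (norm x)\<^sup>2) powr (3/2)))"
  proof (intro continuous_intros ballI)
    fix x assume "x \<in> hyp_plane"
    then have "norm x < 1" by (simp add: disk_iff)
    then have "(norm x)\<^sup>2 < 1" by (simp add: abs_square_less_1)
    then show "(1 - (norm x)\<^sup>2) powr (3/2) \<noteq> 0" by simp
  next
    fix x assume "x \<in> hyp_plane"
    then have "norm x < 1" by (simp add: disk_iff)
    then have "(norm x)\<^sup>2 < 1" by (simp add: abs_square_less_1)
    then show "1 - (norm x)\<^sup>2 \<noteq> 0" by simp
  qed
  then show ?thesis unfolding rho_def .
qed

lemma rho_ge1: "norm x < 1 \<Longrightarrow> 1 \<le> rho x"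
proof -
  assume "norm x < 1"
  then have a: "(norm x)\<^sup>2 < 1" by (simp add: abs_square_less_1)
  let ?P = "1 - (norm x)\<^sup>2"
  have "0 < ?P" "?P \<le> 1" using a by auto
  then have "?P * sqrt ?P \<le> 1" by (simp add: mult_le_one)
  moreover have "0 < ?P * sqrt ?P" using \<open>0 < ?P\<close> by simp
  ultimately show ?thesis using rho_alt[OF \<open>norm x < 1\<close>] by simp
qed

lemma rho_nonneg: "norm x < 1 \<Longrightarrow> 0 \<le> rho x"
  using rho_ge1 by force

lemma Kf_sym: "Kf p q = Kf q p"
  by (simp add: Kf_def inner_commute mult.commute)

lemma Kf_ge1:
  assumes "norm p < 1" "norm q < 1"
  shows "1 \<le> Kf p q"
proof -
  have cs: "p \<bullet> q \<le> norm p * norm q" by (rule norm_cauchy_schwarz)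
  have n: "0 \<le> norm p" "0 \<le> norm q" by auto
  have pq1: "norm p * norm q < 1" using assms n by (metis mult_le_one less_le_not_le not_le_imp_less mult_strict_mono' zero_le_one mult_1_right)
  have P: "0 < 1 - (norm p)\<^sup>2" "0 < 1 - (norm q)\<^sup>2" using assms n
    by (simp_all add: abs_square_less_1)
  have A: "0 < 1 - p \<bullet> q" using cs pq1 by linarith
  have "(1 - norm p * norm q)\<^sup>2 \<le> (1 - p \<bullet> q)\<^sup>2"
    using cs pq1 by (intro power_mono) auto
  moreover have "(1 - (norm p)\<^sup>2) * (1 - (norm q)\<^sup>2) \<le> (1 - norm p * norm q)\<^sup>2"
  proof -
    have "(1 - norm p * norm q)\<^sup>2 - (1 - (norm p)\<^sup>2) * (1 - (norm q)\<^sup>2) = (norm p - norm q)\<^sup>2"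
      by (simp add: power2_eq_square algebra_simps)
    then show ?thesis by (smt (verit) zero_le_power2)
  qed
  ultimately have "(1 - (norm p)\<^sup>2) * (1 - (norm q)\<^sup>2) \<le> (1 - p \<bullet> q)\<^sup>2" by linarith
  then have "sqrt ((1 - (norm p)\<^sup>2) * (1 - (norm q)\<^sup>2)) \<le> 1 - p \<bullet> q"
    using A by (simp add: real_le_lsqrt)
  moreover have "0 < sqrt ((1 - (norm p)\<^sup>2) * (1 - (norm q)\<^sup>2))" using P by simp
  ultimately show ?thesis by (simp add: Kf_def)
qed

lemma hdist_nonneg: "norm p < 1 \<Longrightarrow> norm q < 1 \<Longrightarrow> 0 \<le> hdist p q"
  by (simp add: hdist_Kf Kf_ge1 arcosh_nonneg_real)

definition iso :: "(complex \<Rightarrow> complex) \<Rightarrow> bool" where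
  "iso \<Phi> \<longleftrightarrow> (\<forall>z. norm z < 1 \<longrightarrow> norm (\<Phi> z) < 1) \<and>
     (\<forall>p q. norm p < 1 \<longrightarrow> norm q < 1 \<longrightarrow> Kf (\<Phi> p) (\<Phi> q) = Kf p q) \<and>
     (\<forall>a b c. norm a < 1 \<longrightarrow> norm b < 1 \<longrightarrow> norm c < 1 \<longrightarrow>
        \<Phi> ` (convex hull {a, b, c}) = convex hull {\<Phi> a, \<Phi> b, \<Phi> c}) \<and>
     (\<forall>S. compact S \<longrightarrow> S \<subseteq> hyp_plane \<longrightarrow> hyp_area (\<Phi> ` S) = hyp_area S)"

lemma hull_in_disk: "norm a < 1 \<Longrightarrow> norm b < 1 \<Longrightarrow> norm c < 1 \<Longrightarrow> convex hull {a, b, c} \<subseteq> hyp_plane"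
  unfolding hyp_plane_def by (rule hull_minimal) (auto simp: convex_ball)

lemma seg_in_disk: "norm b < 1 \<Longrightarrow> norm c < 1 \<Longrightarrow> closed_segment b c \<subseteq> hyp_plane"
  using hull_in_disk[of b b c] by (simp add: segment_convex_hull insert_commute)

lemma iso_seg:
  assumes "iso \<Phi>" "norm b < 1" "norm c < 1"
  shows "\<Phi> ` closed_segment b c = closed_segment (\<Phi> b) (\<Phi> c)"
proof -
  have "\<Phi> ` (convex hull {b, c, c}) = convex hull {\<Phi> b, \<Phi> c, \<Phi> c}"
    using assms unfolding iso_def by blast
  then show ?thesis by (simp add: segment_convex_hull)
qed

lemma iso_hdist_set:
  assumes "iso \<Phi>" "norm a < 1" "norm b < 1" "norm c < 1"
  shows "hdist_set (\<Phi> a) (closed_segment (\<Phi> b) (\<Phi> c)) = hdist_set a (closed_segment b c)"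
proof -
  have "hdist (\<Phi> a) ` closed_segment (\<Phi> b) (\<Phi> c) = (\<lambda>q. hdist (\<Phi> a) (\<Phi> q)) ` closed_segment b c"
    unfolding iso_seg[OF assms(1,3,4), symmetric] by (simp add: image_image)
  also have "\<dots> = hdist a ` closed_segment b c"
  proof (rule image_cong[OF refl])
    fix q assume "q \<in> closed_segment b c"
    then have "norm q < 1" using seg_in_disk[OF assms(3,4)] by (auto simp: disk_iff)
    then show "hdist (\<Phi> a) (\<Phi> q) = hdist a q"
      using assms(1,2) unfolding iso_def hdist_Kf by simp
  qed
  finally show ?thesis by (simp add: hdist_set_def)
qed

lemma iso_height:
  assumes "iso \<Phi>" "norm a < 1" "norm b < 1" "norm c < 1"
  shows "hyp_height (\<Phi> a) (\<Phi> b) (\<Phi> c) = hyp_height a b c"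
  unfolding hyp_height_def
  using iso_hdist_set[OF assms(1,2,3,4)] iso_hdist_set[OF assms(1,3,2,4)] iso_hdist_set[OF assms(1,4,2,3)]
  by simp

lemma iso_area:
  assumes "iso \<Phi>" "norm a < 1" "norm b < 1" "norm c < 1"
  shows "hyp_area (hyp_triangle (\<Phi> a) (\<Phi> b) (\<Phi> c)) = hyp_area (hyp_triangle a b c)"
proof -
  have "hyp_triangle (\<Phi> a) (\<Phi> b) (\<Phi> c) = \<Phi> ` hyp_triangle a b c"
    using assms unfolding iso_def hyp_triangle_def by simp
  moreover have "compact (hyp_triangle a b c)"
    unfolding hyp_triangle_def by (rule finite_imp_compact_convex_hull) simp
  moreover have "hyp_triangle a b c \<subseteq> hyp_plane"
    unfolding hyp_triangle_def by (rule hull_in_disk[OF assms(2,3,4)])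
  ultimately show ?thesis using assms(1) unfolding iso_def by simp
qed

definition PT :: "complex \<Rightarrow> complex \<Rightarrow> complex \<Rightarrow> bool" where
  "PT a b c \<longleftrightarrow> 1/32 * min 1 ((hyp_height a b c)\<^sup>2) \<le> hyp_area (hyp_triangle a b c)"

definition Longest :: "complex \<Rightarrow> complex \<Rightarrow> complex \<Rightarrow> bool" where
  "Longest a b c \<longleftrightarrow> Kf a b \<le> Kf b c \<and> Kf a c \<le> Kf b c"

lemma iso_transfer:
  assumes "iso \<Phi>" "norm a < 1" "norm b < 1" "norm c < 1"
  shows "PT (\<Phi> a) (\<Phi> b) (\<Phi> c) \<longleftrightarrow> PT a b c"
    and "Longest (\<Phi> a) (\<Phi> b) (\<Phi> c) \<longleftrightarrow> Longest a b c"
    and "norm (\<Phi> a) < 1" "norm (\<Phi> b) < 1" "norm (\<Phi> c) < 1"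
  using assms iso_height[OF assms] iso_area[OF assms] unfolding PT_def Longest_def iso_def
  by auto

lemma inner_mult_unit:
  fixes u p q :: complex
  assumes "norm u = 1"
  shows "(u * p) \<bullet> (u * q) = p \<bullet> q"
proof -
  have u: "(Re u)\<^sup>2 + (Im u)\<^sup>2 = 1" using assms by (simp add: norm_sq_complex[symmetric])
  have "(u * p) \<bullet> (u * q) = ((Re u)\<^sup>2 + (Im u)\<^sup>2) * (p \<bullet> q)"
    by (simp add: inner_complex_def power2_eq_square algebra_simps)
  then show ?thesis using u by simp
qed

lemma iso_rot:
  fixes u :: complex
  assumes u: "norm u = 1"
  shows "iso (\<lambda>z. u * z)"
  unfolding iso_def
proof (intro conjI allI impI)
  fix z :: complex assume "norm z < 1" then show "norm (u * z) < 1" using u by (simp add: norm_mult)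
next
  fix p q :: complex
  show "Kf (u * p) (u * q) = Kf p q"
    unfolding Kf_def using u by (simp add: inner_mult_unit norm_mult)
next
  fix a b c :: complex
  have "linear (\<lambda>z. u * z)" using bounded_linear_mult_right bounded_linear.linear by blast
  then show "(\<lambda>z. u * z) ` (convex hull {a, b, c}) = convex hull {u * a, u * b, u * c}"
    by (simp add: convex_hull_linear_image)
next
  fix S :: "complex set" assume S: "compact S" "S \<subseteq> hyp_plane"
  have "integral ((\<lambda>z. u * z) ` S) rho = integral S rho"
  proof (rule cv_complex[where D="\<lambda>z w. u * w"])
    show "compact S" by fact
    show "((*) u has_derivative (*) u) (at z within S)" for z
      by (rule bounded_linear_imp_has_derivative[OF bounded_linear_mult_right])
    have "u \<noteq> 0" using u by auto
    then show "inj_on ((*) u) S" by (auto simp: inj_on_def)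
    have j: "jac ((*) u) = 1"
    proof -
      have "(Re u)\<^sup>2 + (Im u)\<^sup>2 = 1" using u by (simp add: norm_sq_complex[symmetric])
      then show ?thesis by (simp add: jac_def power2_eq_square)
    qed
    show "\<bar>jac ((*) u)\<bar> * rho (u * z) = rho z" for z
      unfolding j using u by (simp add: rho_def norm_mult)
    show "continuous_on S rho" using cont_rho S(2) continuous_on_subset by blast
  qed
  then show "hyp_area ((\<lambda>z. u * z) ` S) = hyp_area S" by (simp add: hyp_area_rho)
qed

lemma alg_P:
  fixes s x y k :: real
  assumes d: "1 - s * x \<noteq> 0" and k: "k\<^sup>2 = 1 - s\<^sup>2"
  shows "1 - (((x - s) / (1 - s * x))\<^sup>2 + (k * y / (1 - s * x))\<^sup>2) = (1 - s\<^sup>2) * (1 - (x\<^sup>2 + y\<^sup>2)) / (1 - s * x)\<^sup>2"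
proof -
  have "(k * y / (1 - s * x))\<^sup>2 = (1 - s\<^sup>2) * y\<^sup>2 / (1 - s * x)\<^sup>2"
    by (simp add: power_mult_distrib power_divide k)
  moreover have "1 - (((x - s) / (1 - s * x))\<^sup>2 + (1 - s\<^sup>2) * y\<^sup>2 / (1 - s * x)\<^sup>2) = (1 - s\<^sup>2) * (1 - (x\<^sup>2 + y\<^sup>2)) / (1 - s * x)\<^sup>2"
    using d by (simp add: field_simps) (simp add: power2_eq_square algebra_simps)
  ultimately show ?thesis by simp
qed

lemma alg_inner:
  fixes s x y x' y' k :: real
  assumes d: "1 - s * x \<noteq> 0" "1 - s * x' \<noteq> 0" and k: "k * k = 1 - s\<^sup>2"
  shows "1 - ((x - s) / (1 - s * x) * ((x' - s) / (1 - s * x')) + (k * y / (1 - s * x)) * (k * y' / (1 - s * x')))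
     = (1 - s\<^sup>2) * (1 - (x * x' + y * y')) / ((1 - s * x) * (1 - s * x'))"
proof -
  have "(k * y / (1 - s * x)) * (k * y' / (1 - s * x')) = (k * k) * y * y' / ((1 - s * x) * (1 - s * x'))"
    by simp
  also have "\<dots> = (1 - s\<^sup>2) * y * y' / ((1 - s * x) * (1 - s * x'))" by (simp add: k)
  finally have e: "(k * y / (1 - s * x)) * (k * y' / (1 - s * x')) = (1 - s\<^sup>2) * y * y' / ((1 - s * x) * (1 - s * x'))" .
  define D where "D = (1 - s * x) * (1 - s * x')"
  have D: "D \<noteq> 0" using d by (simp add: D_def)
  have e1: "(x - s) / (1 - s * x) * ((x' - s) / (1 - s * x')) = (x - s) * (x' - s) / D"
    by (simp add: D_def)
  have e2: "1 - ((x - s) * (x' - s) / D + (1 - s\<^sup>2) * y * y' / D) = (D - ((x - s) * (x' - s) + (1 - s\<^sup>2) * y * y')) / D"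
    using D by (simp add: diff_divide_distrib add_divide_distrib)
  have e3: "D - ((x - s) * (x' - s) + (1 - s\<^sup>2) * y * y') = (1 - s\<^sup>2) * (1 - (x * x' + y * y'))"
    by (simp add: D_def algebra_simps power2_eq_square)
  have "1 - ((x - s) / (1 - s * x) * ((x' - s) / (1 - s * x')) + (k * y / (1 - s * x)) * (k * y' / (1 - s * x')))
      = 1 - ((x - s) * (x' - s) / D + (1 - s\<^sup>2) * y * y' / D)"
    unfolding e e1 by (simp add: D_def)
  also have "\<dots> = (1 - s\<^sup>2) * (1 - (x * x' + y * y')) / D" unfolding e2 e3 ..
  finally show ?thesis by (simp add: D_def)
qed

lemma alg_inv_re:
  fixes s x :: real
  assumes d: "1 - s * x \<noteq> 0" and k0: "1 - s\<^sup>2 \<noteq> 0"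
  shows "((x - s) / (1 - s * x) - - s) / (1 - - s * ((x - s) / (1 - s * x))) = x"
proof -
  have a: "(x - s) / (1 - s * x) - - s = x * (1 - s\<^sup>2) / (1 - s * x)"
    using d by (simp add: field_simps power2_eq_square)
  have b: "1 - - s * ((x - s) / (1 - s * x)) = (1 - s\<^sup>2) / (1 - s * x)"
    using d by (simp add: field_simps power2_eq_square)
  show ?thesis unfolding a b using d k0 by simp
qed

lemma alg_inv_im:
  fixes s x y k :: real
  assumes d: "1 - s * x \<noteq> 0" and k0: "1 - s\<^sup>2 \<noteq> 0" and k: "k * k = 1 - s\<^sup>2"
  shows "k * (k * y / (1 - s * x)) / (1 - - s * ((x - s) / (1 - s * x))) = y"
proof -
  have b: "1 - - s * ((x - s) / (1 - s * x)) = (1 - s\<^sup>2) / (1 - s * x)"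
    using d by (simp add: field_simps power2_eq_square)
  have "k * (k * y / (1 - s * x)) = (1 - s\<^sup>2) * y / (1 - s * x)"
    by (simp add: k[symmetric])
  show ?thesis unfolding b using d k0 k by (simp add: mult.assoc[symmetric])
qed


definition bst :: "real \<Rightarrow> complex \<Rightarrow> complex" where
  "bst s z = Complex ((Re z - s) / (1 - s * Re z)) (sqrt (1 - s\<^sup>2) * Im z / (1 - s * Re z))"

lemma Re_bst: "Re (bst s z) = (Re z - s) / (1 - s * Re z)" by (simp add: bst_def)
lemma Im_bst: "Im (bst s z) = sqrt (1 - s\<^sup>2) * Im z / (1 - s * Re z)" by (simp add: bst_def)

lemma s_sq: "\<bar>s\<bar> < 1 \<Longrightarrow> 0 < 1 - (s::real)\<^sup>2"
  using abs_square_less_1[of s] by linarith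

lemma sqrt_sq_s: "\<bar>s\<bar> < 1 \<Longrightarrow> sqrt (1 - (s::real)\<^sup>2) * sqrt (1 - s\<^sup>2) = 1 - s\<^sup>2"
  using s_sq[of s] by simp

lemma bst_den:
  assumes "\<bar>s\<bar> < 1" "norm z < 1"
  shows "0 < 1 - s * Re z"
proof -
  have "\<bar>Re z\<bar> < 1" using abs_Re_le_cmod[of z] assms(2) by linarith
  then have "\<bar>s\<bar> * \<bar>Re z\<bar> \<le> \<bar>s\<bar>" by (simp add: mult_left_le)
  then have "\<bar>s * Re z\<bar> < 1" using assms(1) by (simp add: abs_mult)
  then show ?thesis by linarith
qed

lemma bst_P:
  assumes "\<bar>s\<bar> < 1" "norm z < 1"
  shows "1 - (norm (bst s z))\<^sup>2 = (1 - s\<^sup>2) * (1 - (norm z)\<^sup>2) / (1 - s * Re z)\<^sup>2"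
proof -
  have d: "1 - s * Re z \<noteq> 0" using bst_den[OF assms] by simp
  have k: "(sqrt (1 - s\<^sup>2))\<^sup>2 = 1 - s\<^sup>2" using s_sq[OF assms(1)] by simp
  show ?thesis
    unfolding norm_sq_complex Re_bst Im_bst by (rule alg_P[OF d k])
qed

lemma bst_inner:
  assumes "\<bar>s\<bar> < 1" "norm p < 1" "norm q < 1"
  shows "1 - bst s p \<bullet> bst s q = (1 - s\<^sup>2) * (1 - p \<bullet> q) / ((1 - s * Re p) * (1 - s * Re q))"
proof -
  have d: "1 - s * Re p \<noteq> 0" "1 - s * Re q \<noteq> 0" using bst_den assms by (metis less_irrefl)+
  show ?thesis
    unfolding inner_complex_def Re_bst Im_bst by (rule alg_inner[OF d sqrt_sq_s[OF assms(1)]])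
qed

lemma bst_norm:
  assumes "\<bar>s\<bar> < 1" "norm z < 1"
  shows "norm (bst s z) < 1"
proof -
  have "(norm z)\<^sup>2 < 1" using assms(2) by (simp add: abs_square_less_1)
  then have "0 < (1 - s\<^sup>2) * (1 - (norm z)\<^sup>2) / (1 - s * Re z)\<^sup>2"
    using s_sq[OF assms(1)] bst_den[OF assms] by simp
  then have "(norm (bst s z))\<^sup>2 < 1" using bst_P[OF assms] by linarith
  then show ?thesis by (simp add: abs_square_less_1)
qed

lemma bst_Kf:
  assumes "\<bar>s\<bar> < 1" "norm p < 1" "norm q < 1"
  shows "Kf (bst s p) (bst s q) = Kf p q"
proof -
  define dp where "dp = 1 - s * Re p"
  define dq where "dq = 1 - s * Re q"
  define k where "k = 1 - s\<^sup>2"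
  have dp: "0 < dp" unfolding dp_def using bst_den assms by blast
  have dq: "0 < dq" unfolding dq_def using bst_den assms by blast
  have k: "0 < k" unfolding k_def using s_sq assms by blast
  have "(1 - (norm (bst s p))\<^sup>2) * (1 - (norm (bst s q))\<^sup>2)
        = (k * k) * ((1 - (norm p)\<^sup>2) * (1 - (norm q)\<^sup>2)) / (dp * dq)\<^sup>2"
    unfolding bst_P[OF assms(1,2)] bst_P[OF assms(1,3)] dp_def dq_def k_def
    by (simp add: power_mult_distrib)
  then have "sqrt ((1 - (norm (bst s p))\<^sup>2) * (1 - (norm (bst s q))\<^sup>2))
        = k * sqrt ((1 - (norm p)\<^sup>2) * (1 - (norm q)\<^sup>2)) / (dp * dq)"
    using k dp dq by (simp add: real_sqrt_mult real_sqrt_divide)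
  moreover have "1 - bst s p \<bullet> bst s q = k * (1 - p \<bullet> q) / (dp * dq)"
    using bst_inner[OF assms] unfolding dp_def dq_def k_def .
  ultimately show ?thesis unfolding Kf_def using k dp dq by simp
qed

lemma bst_inv:
  assumes "\<bar>s\<bar> < 1" "norm z < 1"
  shows "bst (-s) (bst s z) = z"
proof -
  have d: "1 - s * Re z \<noteq> 0" using bst_den[OF assms] by simp
  have k0: "1 - s\<^sup>2 \<noteq> 0" using s_sq[OF assms(1)] by simp
  have "Re (bst (-s) (bst s z)) = Re z"
    unfolding Re_bst by (rule alg_inv_re[OF d k0])
  moreover have "Im (bst (-s) (bst s z)) = Im z"
    unfolding Im_bst Re_bst using alg_inv_im[OF d k0 sqrt_sq_s[OF assms(1)]] by simp
  ultimately show ?thesis by (simp add: complex_eq_iff)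
qed

definition Dbst :: "real \<Rightarrow> complex \<Rightarrow> complex \<Rightarrow> complex" where
  "Dbst s z = (\<lambda>w. Complex ((1 - s\<^sup>2) * Re w / (1 - s * Re z)\<^sup>2)
       (sqrt (1 - s\<^sup>2) * (Im w * (1 - s * Re z) + s * Im z * Re w) / (1 - s * Re z)\<^sup>2))"

lemma alg_D1:
  fixes s X a :: real
  assumes "1 - s * X \<noteq> 0"
  shows "a / (1 - s * X) - (s - X) * ((1 - s * X) * (s * a) * (1 - s * X)) / (1 - s * X) ^ 4 = (1 - s\<^sup>2) * a / (1 - s * X)\<^sup>2"
proof -
  obtain d where d: "d = 1 - s * X" by blast
  have d0: "d \<noteq> 0" using assms d by simp
  have "(s - X) * (d * (s * a) * d) / d ^ 4 = (s - X) * s * a / d\<^sup>2"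
    using d0 by (simp add: field_simps power2_eq_square eval_nat_numeral)
  moreover have "a / d - (s - X) * s * a / d\<^sup>2 = (a * d - (s - X) * s * a) / d\<^sup>2"
    using d0 by (simp add: field_simps power2_eq_square eval_nat_numeral)
  moreover have "a * d - (s - X) * s * a = (1 - s\<^sup>2) * a"
    unfolding d by (simp add: algebra_simps power2_eq_square)
  ultimately show ?thesis using d by simp
qed

lemma alg_D2:
  fixes s X Y a b k :: real
  assumes "1 - s * X \<noteq> 0"
  shows "k * Y * ((1 - s * X) * (s * a) * (1 - s * X)) / (1 - s * X) ^ 4 + k * b / (1 - s * X)
     = k * (b * (1 - s * X) + s * Y * a) / (1 - s * X)\<^sup>2"
proof -
  obtain d where d: "d = 1 - s * X" by blast
  have d0: "d \<noteq> 0" using assms d by simp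
  have "k * Y * (d * (s * a) * d) / d ^ 4 + k * b / d = k * (b * d + s * Y * a) / d\<^sup>2"
    using d0 by (simp add: field_simps power2_eq_square eval_nat_numeral)
  then show ?thesis using d by simp
qed

lemma bst_deriv:
  assumes "1 - s * Re z \<noteq> 0"
  shows "(bst s has_derivative Dbst s z) (at z within S)"
proof -
  have e: "bst s = (\<lambda>z. of_real ((Re z - s) / (1 - s * Re z)) + \<i> * of_real (sqrt (1 - s\<^sup>2) * Im z / (1 - s * Re z)))"
    by (auto simp: bst_def complex_eq_iff)
  have d': "s * Re z \<noteq> 1" using assms by auto
  show ?thesis unfolding e
    apply (rule has_derivative_eq_rhs)
     apply (rule derivative_intros has_derivative_Re has_derivative_Im has_derivative_ident
         has_derivative_divide' has_derivative_of_real has_derivative_mult_right | simp add: assms d')+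
    apply (rule ext)
    apply (simp add: Dbst_def complex_eq_iff)
    using assms by (simp add: alg_D1 alg_D2)
qed

lemma jac_Dbst:
  assumes "1 - s * Re z \<noteq> 0"
  shows "jac (Dbst s z) = (1 - s\<^sup>2) * sqrt (1 - s\<^sup>2) / (1 - s * Re z) ^ 3"
proof -
  obtain d where d: "d = 1 - s * Re z" by blast
  have d0: "d \<noteq> 0" using assms d by simp
  have "jac (Dbst s z) = (1 - s\<^sup>2) / d\<^sup>2 * (sqrt (1 - s\<^sup>2) * d / d\<^sup>2)"
    by (simp add: jac_def Dbst_def d)
  also have "\<dots> = (1 - s\<^sup>2) * sqrt (1 - s\<^sup>2) / d ^ 3"
    using d0 by (simp add: field_simps power2_eq_square eval_nat_numeral)
  finally show ?thesis using d by simp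
qed

lemma bst_rho:
  assumes "\<bar>s\<bar> < 1" "norm z < 1"
  shows "\<bar>jac (Dbst s z)\<bar> * rho (bst s z) = rho z"
proof -
  define d where "d = 1 - s * Re z"
  define P where "P = 1 - (norm z)\<^sup>2"
  define k where "k = 1 - s\<^sup>2"
  have d: "0 < d" unfolding d_def using bst_den[OF assms] .
  have P: "0 < P" unfolding P_def using assms(2) by (simp add: abs_square_less_1)
  have k: "0 < k" unfolding k_def using s_sq[OF assms(1)] .
  have j: "jac (Dbst s z) = k * sqrt k / d ^ 3"
    unfolding k_def d_def using d d_def by (intro jac_Dbst) simp
  have P': "1 - (norm (bst s z))\<^sup>2 = k * P / d\<^sup>2"
    using bst_P[OF assms] unfolding k_def P_def d_def .
  have sP': "sqrt (k * P / d\<^sup>2) = sqrt k * sqrt P / d"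
    using d by (simp add: real_sqrt_mult real_sqrt_divide)
  have "rho (bst s z) = 1 / ((k * P / d\<^sup>2) * (sqrt k * sqrt P / d))"
    using rho_alt[OF bst_norm[OF assms]] P' sP' by simp
  also have "\<dots> = d ^ 3 / (k * sqrt k * (P * sqrt P))"
    using k d P by (simp add: field_simps power2_eq_square eval_nat_numeral)
  finally have r1: "rho (bst s z) = d ^ 3 / (k * sqrt k * (P * sqrt P))" .
  moreover have "rho z = 1 / (P * sqrt P)" using rho_alt[OF assms(2)] unfolding P_def by simp
  moreover have "\<bar>k * sqrt k / d ^ 3\<bar> = k * sqrt k / d ^ 3" using k d by simp
  ultimately show ?thesis unfolding j r1 using k d P
    by (simp add: field_simps)
qed

lemma alg_comb:
  fixes da db dc D u v w A B C :: real
  assumes "da \<noteq> 0" "db \<noteq> 0" "dc \<noteq> 0" "D \<noteq> 0"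
  shows "(u * da / D) * (A / da) + (v * db / D) * (B / db) + (w * dc / D) * (C / dc) = (u * A + v * B + w * C) / D"
  using assms by (simp add: field_simps)

lemma bst_hull_sub:
  assumes s: "\<bar>s\<bar> < 1" and n: "norm a < 1" "norm b < 1" "norm c < 1"
  shows "bst s ` (convex hull {a, b, c}) \<subseteq> convex hull {bst s a, bst s b, bst s c}"
proof
  fix y assume "y \<in> bst s ` (convex hull {a, b, c})"
  then obtain p where p: "p \<in> convex hull {a, b, c}" "y = bst s p" by blast
  then obtain u v w where uvw: "0 \<le> u" "0 \<le> v" "0 \<le> w" "u + v + w = 1"
      "p = u *\<^sub>R a + v *\<^sub>R b + w *\<^sub>R c"
    by (auto simp: convex_hull_3)
  have pn: "norm p < 1" using p(1) hull_in_disk[OF n] by (auto simp: disk_iff)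
  define da where "da = 1 - s * Re a"
  define db where "db = 1 - s * Re b"
  define dc where "dc = 1 - s * Re c"
  define D where "D = 1 - s * Re p"
  have pos: "0 < da" "0 < db" "0 < dc" "0 < D"
    unfolding da_def db_def dc_def D_def using bst_den s n pn by blast+
  have ReP: "Re p = u * Re a + v * Re b + w * Re c" "Im p = u * Im a + v * Im b + w * Im c"
    using uvw(5) by simp_all
  have Deq: "D = u * da + v * db + w * dc"
    unfolding D_def da_def db_def dc_def ReP using uvw(4)
    by (simp add: algebra_simps)
  define k where "k = sqrt (1 - s\<^sup>2)"
  let ?ma = "u * da / D" and ?mb = "v * db / D" and ?mc = "w * dc / D"
  have "bst s p = ?ma *\<^sub>R bst s a + ?mb *\<^sub>R bst s b + ?mc *\<^sub>R bst s c"
  proof (rule complex_eqI)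
    have "Re (?ma *\<^sub>R bst s a + ?mb *\<^sub>R bst s b + ?mc *\<^sub>R bst s c)
        = ?ma * ((Re a - s) / da) + ?mb * ((Re b - s) / db) + ?mc * ((Re c - s) / dc)"
      by (simp add: Re_bst da_def db_def dc_def)
    also have "\<dots> = (u * (Re a - s) + v * (Re b - s) + w * (Re c - s)) / D"
      using pos by (intro alg_comb) auto
    also have "u * (Re a - s) + v * (Re b - s) + w * (Re c - s) = Re p - s"
      unfolding ReP using uvw(4) by (simp add: algebra_simps) (metis add.assoc distrib_left mult.commute mult_1)
    finally show "Re (bst s p) = Re (?ma *\<^sub>R bst s a + ?mb *\<^sub>R bst s b + ?mc *\<^sub>R bst s c)"
      by (simp add: Re_bst D_def)
  next
    have "Im (?ma *\<^sub>R bst s a + ?mb *\<^sub>R bst s b + ?mc *\<^sub>R bst s c)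
        = ?ma * (k * Im a / da) + ?mb * (k * Im b / db) + ?mc * (k * Im c / dc)"
      by (simp add: Im_bst da_def db_def dc_def k_def)
    also have "\<dots> = (u * (k * Im a) + v * (k * Im b) + w * (k * Im c)) / D"
      using pos by (intro alg_comb) auto
    also have "u * (k * Im a) + v * (k * Im b) + w * (k * Im c) = k * Im p"
      unfolding ReP by (simp add: algebra_simps)
    finally show "Im (bst s p) = Im (?ma *\<^sub>R bst s a + ?mb *\<^sub>R bst s b + ?mc *\<^sub>R bst s c)"
      by (simp add: Im_bst D_def k_def)
  qed
  moreover have "0 \<le> ?ma" "0 \<le> ?mb" "0 \<le> ?mc" using pos uvw by auto
  moreover have "?ma + ?mb + ?mc = 1"
  proof -
    have "?ma + ?mb + ?mc = (u * da + v * db + w * dc) / D" by (simp add: add_divide_distrib)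
    then show ?thesis using pos(4) Deq by simp
  qed
  ultimately show "y \<in> convex hull {bst s a, bst s b, bst s c}"
    unfolding p(2) convex_hull_3 by blast
qed


lemma iso_bst:
  assumes s: "\<bar>s\<bar> < 1"
  shows "iso (bst s)"
  unfolding iso_def
proof (intro conjI allI impI)
  fix z :: complex assume "norm z < 1" then show "norm (bst s z) < 1" using bst_norm s by blast
next
  fix p q :: complex assume "norm p < 1" "norm q < 1"
  then show "Kf (bst s p) (bst s q) = Kf p q" using bst_Kf s by blast
next
  fix a b c :: complex assume n: "norm a < 1" "norm b < 1" "norm c < 1"
  show "bst s ` (convex hull {a, b, c}) = convex hull {bst s a, bst s b, bst s c}"
  proof
    show "bst s ` (convex hull {a, b, c}) \<subseteq> convex hull {bst s a, bst s b, bst s c}"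
      by (rule bst_hull_sub[OF s n])
  next
    show "convex hull {bst s a, bst s b, bst s c} \<subseteq> bst s ` (convex hull {a, b, c})"
    proof
      fix y assume y: "y \<in> convex hull {bst s a, bst s b, bst s c}"
      have s': "\<bar>-s\<bar> < 1" using s by simp
      have nb: "norm (bst s a) < 1" "norm (bst s b) < 1" "norm (bst s c) < 1"
        using bst_norm[OF s] n by blast+
      have yn: "norm y < 1" using y hull_in_disk[OF nb] by (auto simp: disk_iff)
      have "bst (-s) y \<in> convex hull {bst (-s) (bst s a), bst (-s) (bst s b), bst (-s) (bst s c)}"
        using bst_hull_sub[OF s' nb] y by blast
      then have x: "bst (-s) y \<in> convex hull {a, b, c}" using bst_inv[OF s] n by simp
      have "bst s (bst (-s) y) = y" using bst_inv[OF s' yn] by simp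
      then show "y \<in> bst s ` (convex hull {a, b, c})" using x by (metis image_eqI)
    qed
  qed
next
  fix S :: "complex set" assume S: "compact S" "S \<subseteq> hyp_plane"
  have Sn: "z \<in> S \<Longrightarrow> norm z < 1" for z using S(2) by (auto simp: disk_iff)
  have "integral (bst s ` S) rho = integral S rho"
  proof (rule cv_complex[where D="Dbst s"])
    show "compact S" by fact
    show "(bst s has_derivative Dbst s z) (at z within S)" if "z \<in> S" for z
      using bst_deriv bst_den[OF s Sn[OF that]] by simp
    show "inj_on (bst s) S"
      by (rule inj_on_inverseI[where g="bst (-s)"]) (use bst_inv[OF s] Sn in auto)
    show "\<bar>jac (Dbst s z)\<bar> * rho (bst s z) = rho z" if "z \<in> S" for z
      using bst_rho[OF s Sn[OF that]] .
    show "continuous_on S rho" using cont_rho S(2) continuous_on_subset by blast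
  qed
  then show "hyp_area (bst s ` S) = hyp_area S" by (simp add: hyp_area_rho)
qed

lemma aux_m1:
  fixes m t :: real
  assumes "0 \<le> m" "m < 1" "0 \<le> t" "t < 1" "1 - m\<^sup>2 \<le> (1 + m\<^sup>2)\<^sup>2 * (1 - t\<^sup>2)"
  shows "t\<^sup>2 \<le> 3 * m\<^sup>2"
proof (rule ccontr)
  assume "\<not> ?thesis"
  then have "1 - t\<^sup>2 < 1 - 3 * m\<^sup>2" by simp
  moreover have "0 < (1 + m\<^sup>2)\<^sup>2"
  proof -
    have "0 < 1 + m\<^sup>2" by (smt (verit) zero_le_power2)
    then show ?thesis by simp
  qed
  ultimately have "(1 + m\<^sup>2)\<^sup>2 * (1 - t\<^sup>2) < (1 + m\<^sup>2)\<^sup>2 * (1 - 3 * m\<^sup>2)" by simp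
  moreover have "(1 + m\<^sup>2)\<^sup>2 * (1 - 3 * m\<^sup>2) \<le> 1 - m\<^sup>2"
  proof -
    have "(1 + m\<^sup>2)\<^sup>2 * (1 - 3 * m\<^sup>2) = 1 - m\<^sup>2 - 5 * m^4 - 3 * m^6"
      by (simp add: power2_eq_square algebra_simps eval_nat_numeral)
    moreover have "0 \<le> 5 * m^4 + 3 * m^6" using assms(1) by simp
    ultimately show ?thesis by linarith
  qed
  ultimately show False using assms(5) by linarith
qed

lemma aux_sign:
  fixes b g t :: real
  assumes "\<bar>b\<bar> < 1" "\<bar>g\<bar> < 1" "0 \<le> t" "t < 1"
    and "1 - b\<^sup>2 \<le> (1 - b * g)\<^sup>2 * (1 - t\<^sup>2)" "1 - g\<^sup>2 \<le> (1 - b * g)\<^sup>2 * (1 - t\<^sup>2)"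
  shows "b * g \<le> 0"
proof (rule ccontr)
  assume "\<not> ?thesis"
  then have bg: "0 < b * g" by simp
  define \<mu> where "\<mu> = min (b\<^sup>2) (g\<^sup>2)"
  have m1: "1 - \<mu> \<le> (1 - b * g)\<^sup>2 * (1 - t\<^sup>2)" using assms(5,6) by (simp add: \<mu>_def min_def)
  have "\<bar>b\<bar> * \<bar>g\<bar> \<ge> \<mu>"
  proof (cases "\<bar>b\<bar> \<le> \<bar>g\<bar>")
    case True then have "\<bar>b\<bar> * \<bar>b\<bar> \<le> \<bar>b\<bar> * \<bar>g\<bar>" by (rule mult_left_mono[OF _ abs_ge_zero])
    moreover have "\<mu> \<le> \<bar>b\<bar> * \<bar>b\<bar>" by (simp add: \<mu>_def power2_eq_square)
    ultimately show ?thesis by linarith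
  next
    case False then have "\<bar>g\<bar> * \<bar>g\<bar> \<le> \<bar>b\<bar> * \<bar>g\<bar>" by (intro mult_right_mono) auto
    moreover have "\<mu> \<le> \<bar>g\<bar> * \<bar>g\<bar>" by (simp add: \<mu>_def power2_eq_square)
    ultimately show ?thesis by linarith
  qed
  then have bgm: "\<mu> \<le> b * g" using bg by (simp add: abs_mult[symmetric])
  have bg1: "b * g < 1"
  proof -
    have "\<bar>b\<bar> * \<bar>g\<bar> \<le> \<bar>b\<bar>" using assms(2) by (simp add: mult_left_le)
    moreover have "b * g \<le> \<bar>b\<bar> * \<bar>g\<bar>" by (metis abs_ge_self abs_mult)
    ultimately show ?thesis using assms(1) by linarith
  qed
  have mu0: "0 < \<mu>" using bg by (auto simp: \<mu>_def min_def)
  have mu1: "\<mu> < 1" using assms(1,2) by (simp add: \<mu>_def min_def abs_square_less_1)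
  have "(1 - b * g)\<^sup>2 \<le> (1 - \<mu>)\<^sup>2" using bgm bg1 by (intro power_mono) auto
  also have "\<dots> < 1 - \<mu>" using mu0 mu1 by (simp add: power2_eq_square)
  finally have "(1 - b * g)\<^sup>2 < 1 - \<mu>" .
  moreover have "(1 - b * g)\<^sup>2 * (1 - t\<^sup>2) \<le> (1 - b * g)\<^sup>2" using assms(3) by (simp add: mult_left_le)
  ultimately show False using m1 by linarith
qed


lemma kf_ineq:
  fixes A B G X :: real
  assumes "0 < A" "0 < B" "0 < G" "1 / sqrt (A * G) \<le> X / sqrt (B * G)"
  shows "B \<le> X\<^sup>2 * A"
proof -
  have sA: "0 < sqrt A" and sB: "0 < sqrt B" and sG: "0 < sqrt G" using assms by auto
  have "1 / (sqrt A * sqrt G) \<le> X / (sqrt B * sqrt G)" using assms(4) by (simp add: real_sqrt_mult)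
  then have "sqrt B \<le> X * sqrt A" using sA sB sG by (simp add: field_simps)
  moreover have "0 \<le> sqrt B" using sB by simp
  ultimately have "(sqrt B)\<^sup>2 \<le> (X * sqrt A)\<^sup>2" by (rule power_mono)
  moreover have "0 \<le> B" "0 \<le> A" using assms(1,2) by auto
  ultimately show ?thesis by (simp add: power_mult_distrib)
qed

lemma hdist_set_nonneg:
  assumes "norm p < 1" "norm b < 1" "norm c < 1"
  shows "0 \<le> hdist_set p (closed_segment b c)"
  unfolding hdist_set_def
proof (rule cInf_greatest)
  show "hdist p ` closed_segment b c \<noteq> {}" by simp
  fix x assume "x \<in> hdist p ` closed_segment b c"
  then obtain q where q: "q \<in> closed_segment b c" "x = hdist p q" by blast
  then have "norm q < 1" using seg_in_disk[OF assms(2,3)] by (auto simp: disk_iff)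
  then show "0 \<le> x" using q(2) hdist_nonneg assms(1) by blast
qed

lemma hdist_set_le:
  assumes "norm p < 1" "norm b < 1" "norm c < 1" "q \<in> closed_segment b c"
  shows "hdist_set p (closed_segment b c) \<le> hdist p q"
  unfolding hdist_set_def
proof (rule cInf_lower)
  show "hdist p q \<in> hdist p ` closed_segment b c" using assms(4) by simp
  show "bdd_below (hdist p ` closed_segment b c)"
  proof (rule bdd_belowI)
    fix x assume "x \<in> hdist p ` closed_segment b c"
    then obtain q where q: "q \<in> closed_segment b c" "x = hdist p q" by blast
    then have "norm q < 1" using seg_in_disk[OF assms(2,3)] by (auto simp: disk_iff)
    then show "0 \<le> x" using q(2) hdist_nonneg assms(1) by blast
  qed
qed

lemma height_nonneg:
  assumes "norm a < 1" "norm b < 1" "norm c < 1"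
  shows "0 \<le> hyp_height a b c"
  unfolding hyp_height_def using hdist_set_nonneg assms by simp

lemma height_le: "hyp_height a b c \<le> hdist_set a (closed_segment b c)"
  unfolding hyp_height_def by simp

lemma rho_integrable:
  assumes "compact S" "S \<subseteq> hyp_plane"
  shows "rho integrable_on S"
  using cont_compact_integrable[OF assms(1)] cont_rho assms(2) continuous_on_subset by blast

lemma area_nonneg:
  assumes "norm a < 1" "norm b < 1" "norm c < 1"
  shows "0 \<le> hyp_area (hyp_triangle a b c)"
proof -
  have T: "compact (hyp_triangle a b c)" "hyp_triangle a b c \<subseteq> hyp_plane"
    unfolding hyp_triangle_def using hull_in_disk[OF assms] by (auto intro: finite_imp_compact_convex_hull)
  show ?thesis unfolding hyp_area_rho
    by (rule integral_nonneg[OF rho_integrable[OF T]]) (use T rho_nonneg in \<open>auto simp: disk_iff\<close>)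
qed

lemma H_bound:
  fixes t :: real
  assumes "0 \<le> t" "t \<le> 1/2"
  shows "arcosh (1 / sqrt (1 - t\<^sup>2)) \<le> 2 * t"
proof -
  have t4: "t\<^sup>2 \<le> (1/2)\<^sup>2" using assms by (intro power_mono) auto
  then have t2: "0 < 1 - t\<^sup>2" "t\<^sup>2 \<le> 1/4" by (auto simp: power2_eq_square)
  define X where "X = 1 / sqrt (1 - t\<^sup>2)"
  have s1: "sqrt (1 - t\<^sup>2) \<le> 1" "0 < sqrt (1 - t\<^sup>2)" using t2 by auto
  have X1: "1 \<le> X" unfolding X_def using s1 by (simp add: le_divide_eq)
  have "X\<^sup>2 - 1 = t\<^sup>2 / (1 - t\<^sup>2)" unfolding X_def using t2 by (simp add: power_divide field_simps)
  then have sX: "sqrt (X\<^sup>2 - 1) = t / sqrt (1 - t\<^sup>2)" using assms(1) by (simp add: real_sqrt_divide)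
  have "arcosh X = ln (X + sqrt (X\<^sup>2 - 1))" using X1 by (rule arcosh_real_def)
  also have "\<dots> \<le> X + sqrt (X\<^sup>2 - 1) - 1" using X1 real_sqrt_ge_zero[of "X\<^sup>2 - 1"] one_le_power[OF X1, of 2] by (intro ln_le_minus_one) linarith
  also have "X + sqrt (X\<^sup>2 - 1) = X + t / sqrt (1 - t\<^sup>2)" by (simp only: sX)
  also have "X + t / sqrt (1 - t\<^sup>2) = (1 + t) / sqrt (1 - t\<^sup>2)" unfolding X_def by (simp add: add_divide_distrib)
  also have "(1 + t) / sqrt (1 - t\<^sup>2) \<le> 1 + 2 * t"
  proof -
    have "(1 + t)\<^sup>2 \<le> (1 + 2 * t)\<^sup>2 * (1 - t\<^sup>2)"
    proof -
      have "(1 + 2 * t)\<^sup>2 * (1 - t\<^sup>2) - (1 + t)\<^sup>2 = 2 * t * (1 + t) * (1 - 2 * t\<^sup>2)"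
        by (simp add: power2_eq_square algebra_simps)
      moreover have "0 \<le> 2 * t * (1 + t) * (1 - 2 * t\<^sup>2)" using assms t2 by simp
      ultimately show ?thesis by linarith
    qed
    then have "1 + t \<le> sqrt ((1 + 2 * t)\<^sup>2 * (1 - t\<^sup>2))" by (rule real_le_rsqrt)
    then have "1 + t \<le> (1 + 2 * t) * sqrt (1 - t\<^sup>2)" using assms by (simp add: real_sqrt_mult)
    then show ?thesis using t2 by (simp add: divide_le_eq)
  qed
  finally show ?thesis unfolding X_def by simp
qed

lemma normalized:
  fixes t \<beta> \<gamma> :: real
  assumes t: "0 \<le> t" "t < 1" and bg: "\<bar>\<beta>\<bar> < 1" "\<bar>\<gamma>\<bar> < 1"
    and L: "Longest (Complex 0 t) (of_real \<beta>) (of_real \<gamma>)"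
  shows "PT (Complex 0 t) (of_real \<beta>) (of_real \<gamma>)"
proof -
  define a where "a = Complex 0 t"
  define b where "b = (of_real \<beta> :: complex)"
  define c where "c = (of_real \<gamma> :: complex)"
  have geq: "PT (Complex 0 t) (of_real \<beta>) (of_real \<gamma>) \<longleftrightarrow> PT a b c" by (simp add: a_def b_def c_def)
  have na: "norm a = t" unfolding a_def using t by (simp add: cmod_def)
  have nb: "norm b = \<bar>\<beta>\<bar>" "norm c = \<bar>\<gamma>\<bar>" unfolding b_def c_def by simp_all
  have n: "norm a < 1" "norm b < 1" "norm c < 1" using na nb t bg by auto
  have pos: "0 < 1 - t\<^sup>2" "0 < 1 - \<beta>\<^sup>2" "0 < 1 - \<gamma>\<^sup>2"
    using t bg abs_square_less_1[of t] abs_square_less_1[of \<beta>] abs_square_less_1[of \<gamma>] by auto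
  have Kab: "Kf a b = 1 / sqrt ((1 - t\<^sup>2) * (1 - \<beta>\<^sup>2))"
    unfolding Kf_def na nb by (simp add: a_def b_def inner_complex_def)
  have Kac: "Kf a c = 1 / sqrt ((1 - t\<^sup>2) * (1 - \<gamma>\<^sup>2))"
    unfolding Kf_def na nb by (simp add: a_def c_def inner_complex_def)
  have Kbc: "Kf b c = (1 - \<beta> * \<gamma>) / sqrt ((1 - \<beta>\<^sup>2) * (1 - \<gamma>\<^sup>2))"
    unfolding Kf_def na nb by (simp add: b_def c_def inner_complex_def)
  have L': "Kf a b \<le> Kf b c" "Kf a c \<le> Kf b c" using L unfolding Longest_def a_def b_def c_def by auto
  have i1: "1 - \<beta>\<^sup>2 \<le> (1 - \<beta> * \<gamma>)\<^sup>2 * (1 - t\<^sup>2)"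
    by (rule kf_ineq[OF pos(1) pos(2) pos(3)]) (use L'(2) Kac Kbc in simp)
  have i2: "1 - \<gamma>\<^sup>2 \<le> (1 - \<beta> * \<gamma>)\<^sup>2 * (1 - t\<^sup>2)"
    by (rule kf_ineq[OF pos(1) pos(3) pos(2)]) (use L'(1) Kab Kbc in \<open>simp add: mult.commute\<close>)
  have sgn: "\<beta> * \<gamma> \<le> 0" by (rule aux_sign[OF bg t i1 i2])
  define m where "m = max \<bar>\<beta>\<bar> \<bar>\<gamma>\<bar>"
  have m0: "0 \<le> m" "m < 1" using bg by (auto simp: m_def)
  have m2: "m\<^sup>2 = max (\<beta>\<^sup>2) (\<gamma>\<^sup>2)" unfolding m_def
    by (metis abs_le_square_iff max_def power2_abs)
  have im: "1 - m\<^sup>2 \<le> (1 - \<beta> * \<gamma>)\<^sup>2 * (1 - t\<^sup>2)" using i1 i2 m2 by (simp add: max_def)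
  have "\<bar>\<beta> * \<gamma>\<bar> \<le> m * m" unfolding abs_mult m_def
    by (intro mult_mono) auto
  then have "1 - \<beta> * \<gamma> \<le> 1 + m\<^sup>2" using sgn by (simp add: power2_eq_square)
  moreover have "0 \<le> 1 - \<beta> * \<gamma>" using sgn by simp
  ultimately have "(1 - \<beta> * \<gamma>)\<^sup>2 \<le> (1 + m\<^sup>2)\<^sup>2" by (rule power_mono)
  then have "(1 - \<beta> * \<gamma>)\<^sup>2 * (1 - t\<^sup>2) \<le> (1 + m\<^sup>2)\<^sup>2 * (1 - t\<^sup>2)"
    using pos(1) by (intro mult_right_mono) auto
  with im have im2: "1 - m\<^sup>2 \<le> (1 + m\<^sup>2)\<^sup>2 * (1 - t\<^sup>2)" by linarith
  have t3m: "t\<^sup>2 \<le> 3 * m\<^sup>2" by (rule aux_m1[OF m0 t im2])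
  have zseg: "0 \<in> closed_segment b c"
  proof -
    have "(0::real) \<in> closed_segment \<beta> \<gamma>"
      using sgn by (auto simp: closed_segment_eq_real_ivl mult_le_0_iff)
    then show ?thesis unfolding b_def c_def using of_real_closed_segment[of 0 \<beta> \<gamma>] by simp
  qed
  define H where "H = arcosh (1 / sqrt (1 - t\<^sup>2))"
  have hH: "hyp_height a b c \<le> H"
  proof -
    have "hyp_height a b c \<le> hdist_set a (closed_segment b c)" by (rule height_le)
    also have "\<dots> \<le> hdist a 0" by (rule hdist_set_le[OF n zseg])
    also have "hdist a 0 = H" unfolding hdist_Kf Kf_def H_def na by simp
    finally show ?thesis .
  qed
  have h0: "0 \<le> hyp_height a b c" by (rule height_nonneg[OF n])
  define T where "T = hyp_triangle a b c"
  have Tc: "compact T" "T \<subseteq> hyp_plane"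
    unfolding T_def hyp_triangle_def using hull_in_disk[OF n] by (auto intro: finite_imp_compact_convex_hull)
  have area0: "0 \<le> hyp_area T" unfolding T_def by (rule area_nonneg[OF n])
  have "PT a b c"
  proof (cases "t = 0")
    case True
    then have "H = 0" unfolding H_def by simp
    then have "hyp_height a b c = 0" using hH h0 by linarith
    then show ?thesis using area0 unfolding PT_def T_def[symmetric] by simp
  next
    case False
    then have tp: "0 < t" using t by simp
    have mp: "0 < m"
    proof (rule ccontr)
      assume "\<not> 0 < m"
      then have "m = 0" using m0 by simp
      then have "t\<^sup>2 \<le> 0" using t3m by simp
      then have "t = 0" by simp
      then show False using tp by simp
    qed
    obtain \<epsilon> where eps: "\<bar>\<epsilon>\<bar> = m" "of_real \<epsilon> \<in> {b, c}"
      unfolding m_def b_def c_def by (cases "\<bar>\<gamma>\<bar> \<le> \<bar>\<beta>\<bar>") (auto simp: max_def)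
    define lo where "lo = min 0 (\<epsilon> / 2)"
    define hi where "hi = max 0 (\<epsilon> / 2)"
    define B where "B = cbox (Complex lo 0) (Complex hi (t / 2))"
    have contB: "Henstock_Kurzweil_Integration.content B = m * t / 4"
      unfolding B_def content_complex_cbox lo_def hi_def using tp eps(1)
      by (auto simp: min_def max_def)
    have sub0: "convex hull {0, a, of_real \<epsilon>} \<subseteq> T"
    proof -
      have "closed_segment b c \<subseteq> T" unfolding T_def hyp_triangle_def segment_convex_hull
        by (rule hull_mono) auto
      then have "{0, a, of_real \<epsilon>} \<subseteq> T" using zseg eps(2) hull_subset[of "{a, b, c}" convex]
        unfolding T_def hyp_triangle_def by auto
      moreover have "convex T" unfolding T_def hyp_triangle_def by simp
      ultimately show ?thesis by (rule hull_minimal)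
    qed
    have BT: "B \<subseteq> T"
    proof
      fix z assume z: "z \<in> B"
      then have zr: "lo \<le> Re z" "Re z \<le> hi" "0 \<le> Im z" "Im z \<le> t / 2"
        unfolding B_def by (auto simp: in_cbox_complex_iff)
      define lam where "lam = Re z / \<epsilon>"
      define \<mu> where "\<mu> = Im z / t"
      have eps0: "\<epsilon> \<noteq> 0" using eps(1) mp by auto
      have lam: "0 \<le> lam \<and> lam \<le> 1/2"
      proof (cases "0 < \<epsilon>")
        case True
        then have "lo = 0" "hi = \<epsilon> / 2" unfolding lo_def hi_def by auto
        then have "0 \<le> Re z" "Re z \<le> \<epsilon> / 2" using zr by auto
        then show ?thesis unfolding lam_def using True by (simp add: pos_divide_le_eq)
      next
        case False
        then have en: "\<epsilon> < 0" using eps0 by simp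
        then have "lo = \<epsilon> / 2" "hi = 0" unfolding lo_def hi_def by auto
        then have "Re z \<le> 0" "\<epsilon> / 2 \<le> Re z" using zr by auto
        then show ?thesis unfolding lam_def using en by (simp add: neg_divide_le_eq divide_nonneg_neg divide_nonpos_neg)
      qed
      have mu: "0 \<le> \<mu> \<and> \<mu> \<le> 1/2" using zr tp unfolding \<mu>_def by (simp add: pos_divide_le_eq)
      have "z = (1 - lam - \<mu>) *\<^sub>R 0 + \<mu> *\<^sub>R a + lam *\<^sub>R of_real \<epsilon>"
        using eps0 tp unfolding lam_def \<mu>_def a_def by (simp add: complex_eq_iff)
      then have "z \<in> convex hull {0, a, of_real \<epsilon>}"
        unfolding convex_hull_3 using lam mu by (intro CollectI exI[of _ "1 - lam - \<mu>"] exI[of _ \<mu>] exI[of _ lam]) auto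
      then show "z \<in> T" using sub0 by blast
    qed
    have Bdisk: "B \<subseteq> hyp_plane" using BT Tc by auto
    have areaB: "m * t / 4 \<le> hyp_area T"
    proof -
      have "m * t / 4 = integral B (\<lambda>x. 1)"
        unfolding B_def using contB[unfolded B_def] by (simp add: integral_const)
      also have "\<dots> \<le> integral B rho"
      proof (rule integral_le)
        show "(\<lambda>x. 1::real) integrable_on B" unfolding B_def by (rule integrable_const)
        show "rho integrable_on B" using rho_integrable Bdisk unfolding B_def by (simp add: compact_cbox)
        show "1 \<le> rho x" if "x \<in> B" for x using that Bdisk rho_ge1 by (auto simp: disk_iff)
      qed
      also have "\<dots> \<le> integral T rho"
        using BT rho_integrable[OF Tc] rho_integrable[of B] Bdisk Tc rho_nonneg
        by (intro integral_subset_le) (auto simp: B_def disk_iff)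
      finally show ?thesis by (simp add: hyp_area_rho)
    qed
    show ?thesis
    proof (cases "t \<le> 1/2")
      case True
      have "H \<le> 2 * t" unfolding H_def by (rule H_bound[OF t(1) True])
      then have hh: "hyp_height a b c \<le> 2 * t" using hH by linarith
      have h2: "(hyp_height a b c)\<^sup>2 \<le> (2 * t)\<^sup>2" by (rule power_mono[OF hh h0])
      have e4: "(2 * m)\<^sup>2 = 4 * m\<^sup>2" by (simp add: power2_eq_square)
      have "t\<^sup>2 \<le> (2 * m)\<^sup>2" unfolding e4 using t3m zero_le_power2[of m] by linarith
      moreover have "0 \<le> 2 * m" using m0 by simp
      ultimately have t2m: "t \<le> 2 * m" by (rule power2_le_imp_le)
      have tt: "t * t \<le> (2 * m) * t" by (rule mult_right_mono[OF t2m t(1)])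
      have e5: "(2 * t)\<^sup>2 = 4 * (t * t)" by (simp add: power2_eq_square)
      have mn: "min 1 ((hyp_height a b c)\<^sup>2) \<le> (hyp_height a b c)\<^sup>2" by simp
      have "1/32 * min 1 ((hyp_height a b c)\<^sup>2) \<le> m * t / 4"
        using h2 tt mn unfolding e5 by linarith
      then show ?thesis using areaB unfolding PT_def T_def[symmetric] by linarith
    next
      case False
      have "1/4 \<le> m"
      proof (rule ccontr)
        assume "\<not> 1/4 \<le> m"
        then have "m\<^sup>2 \<le> (1/4)\<^sup>2" using m0 by (intro power_mono) auto
        moreover have "(1/2)\<^sup>2 \<le> t\<^sup>2" using False by (intro power_mono) auto
        ultimately show False using t3m by (simp add: power2_eq_square)
      qed
      moreover have "1/2 \<le> t" using False by simp
      ultimately have "1/4 * (1/2) \<le> m * t" by (rule mult_mono) (use m0 in auto)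
      then have "1/32 \<le> hyp_area T" using areaB by linarith
      moreover have "min 1 ((hyp_height a b c)\<^sup>2) \<le> 1" by simp
      ultimately show ?thesis unfolding PT_def T_def[symmetric]
        by linarith
    qed
  qed
  then show ?thesis by (simp add: a_def b_def c_def)
qed

lemma transfer_step:
  assumes "iso \<Phi>" "norm a < 1" "norm b < 1" "norm c < 1" "Longest a b c"
    and "norm (\<Phi> a) < 1 \<Longrightarrow> norm (\<Phi> b) < 1 \<Longrightarrow> norm (\<Phi> c) < 1 \<Longrightarrow>
         Longest (\<Phi> a) (\<Phi> b) (\<Phi> c) \<Longrightarrow> PT (\<Phi> a) (\<Phi> b) (\<Phi> c)"
  shows "PT a b c"
  using iso_transfer[OF assms(1-4)] assms(5,6) by blast

lemma L5a:
  assumes n: "norm a < 1" "norm b < 1" "norm c < 1" and L: "Longest a b c"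
    and r: "Re a = 0" "Im b = 0" "Im c = 0" "0 \<le> Im a"
  shows "PT a b c"
proof -
  have ea: "a = Complex 0 (Im a)" using r by (simp add: complex_eq_iff)
  have eb: "b = of_real (Re b)" "c = of_real (Re c)" using r by (simp_all add: complex_eq_iff)
  have t: "Im a < 1" using n(1) abs_Im_le_cmod[of a] by linarith
  have bg: "\<bar>Re b\<bar> < 1" "\<bar>Re c\<bar> < 1" using n abs_Re_le_cmod[of b] abs_Re_le_cmod[of c] by linarith+
  have "PT (Complex 0 (Im a)) (of_real (Re b)) (of_real (Re c))"
    by (rule normalized[OF r(4) t bg]) (use L ea eb in simp)
  then show ?thesis using ea eb by simp
qed

lemma L5:
  assumes n: "norm a < 1" "norm b < 1" "norm c < 1" and L: "Longest a b c"
    and r: "Re a = 0" "Im b = 0" "Im c = 0"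
  shows "PT a b c"
proof (cases "0 \<le> Im a")
  case True then show ?thesis using L5a assms by blast
next
  case False
  have iso: "iso (\<lambda>z. (-1) * z)" by (rule iso_rot) simp
  show ?thesis
    by (rule transfer_step[OF iso n L]) (rule L5a, use r False in auto)
qed

lemma L4:
  assumes n: "norm a < 1" "norm b < 1" "norm c < 1" and L: "Longest a b c"
    and r: "Im b = 0" "Im c = 0"
  shows "PT a b c"
proof -
  define s where "s = Re a"
  have s: "\<bar>s\<bar> < 1" unfolding s_def using n(1) abs_Re_le_cmod[of a] by linarith
  show ?thesis
  proof (rule transfer_step[OF iso_bst[OF s] n L])
    assume "norm (bst s a) < 1" "norm (bst s b) < 1" "norm (bst s c) < 1" "Longest (bst s a) (bst s b) (bst s c)"
    then show "PT (bst s a) (bst s b) (bst s c)"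
      by (rule L5) (simp_all add: Re_bst Im_bst r s_def)
  qed
qed

lemma L3:
  assumes n: "norm a < 1" "norm b < 1" "norm c < 1" and L: "Longest a b c"
    and r: "Re b = 0" "Re c = 0"
  shows "PT a b c"
proof -
  have iso: "iso (\<lambda>z. (- \<i>) * z)" by (rule iso_rot) simp
  show ?thesis
  proof (rule transfer_step[OF iso n L])
    assume "norm (- \<i> * a) < 1" "norm (- \<i> * b) < 1" "norm (- \<i> * c) < 1" "Longest (- \<i> * a) (- \<i> * b) (- \<i> * c)"
    then show "PT (- \<i> * a) (- \<i> * b) (- \<i> * c)"
      by (rule L4) (simp_all add: r)
  qed
qed

lemma L2:
  assumes n: "norm a < 1" "norm b < 1" "norm c < 1" and L: "Longest a b c"
    and r: "Re b = Re c"
  shows "PT a b c"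
proof -
  define s where "s = Re b"
  have s: "\<bar>s\<bar> < 1" unfolding s_def using n(2) abs_Re_le_cmod[of b] by linarith
  show ?thesis
  proof (rule transfer_step[OF iso_bst[OF s] n L])
    assume "norm (bst s a) < 1" "norm (bst s b) < 1" "norm (bst s c) < 1" "Longest (bst s a) (bst s b) (bst s c)"
    then show "PT (bst s a) (bst s b) (bst s c)"
      by (rule L3) (simp_all add: Re_bst r s_def)
  qed
qed

lemma L1:
  assumes n: "norm a < 1" "norm b < 1" "norm c < 1" and L: "Longest a b c"
    and bc: "b \<noteq> c"
  shows "PT a b c"
proof -
  define d where "d = c - b"
  have d0: "d \<noteq> 0" using bc unfolding d_def by simp
  define u where "u = \<i> * cnj d / of_real (norm d)"
  have u1: "norm u = 1" using d0 unfolding u_def by (simp add: norm_divide norm_mult)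
  have dd: "d * cnj d = of_real (norm d) * of_real (norm d)"
    using complex_norm_square[of d] by (simp add: power2_eq_square)
  have ud: "u * d = \<i> * of_real (norm d)"
    using d0 dd unfolding u_def by (simp add: field_simps)
  have "Re (u * c) = Re (u * b)"
  proof -
    have "Re (u * c) - Re (u * b) = Re (u * d)" unfolding d_def by (simp add: algebra_simps)
    also have "\<dots> = 0" unfolding ud by simp
    finally show ?thesis by simp
  qed
  show ?thesis
  proof (rule transfer_step[OF iso_rot[OF u1] n L])
    assume "norm (u * a) < 1" "norm (u * b) < 1" "norm (u * c) < 1" "Longest (u * a) (u * b) (u * c)"
    then show "PT (u * a) (u * b) (u * c)"
      by (rule L2) (rule sym, fact)
  qed
qed

lemma PT_swap: "PT a b c \<longleftrightarrow> PT b a c"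
  unfolding PT_def hyp_height_def hyp_triangle_def
  by (simp add: insert_commute closed_segment_commute min.commute min.left_commute)

lemma PT_cyc: "PT a b c \<longleftrightarrow> PT c a b"
  unfolding PT_def hyp_height_def hyp_triangle_def
  by (simp add: insert_commute closed_segment_commute min.commute min.left_commute)

lemma PT_all:
  assumes n: "norm a < 1" "norm b < 1" "norm c < 1" and nc: "\<not> collinear {a, b, c}"
  shows "PT a b c"
proof -
  have ab: "a \<noteq> b" using nc by (auto simp: collinear_2 insert_commute)
  have ac: "a \<noteq> c" using nc by (auto simp: collinear_2 insert_commute)
  have bc: "b \<noteq> c" using nc by (auto simp: collinear_2 insert_commute)
  consider "Kf a b \<le> Kf b c \<and> Kf a c \<le> Kf b c" | "Kf a b \<le> Kf a c \<and> Kf b c \<le> Kf a c"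
    | "Kf a c \<le> Kf a b \<and> Kf b c \<le> Kf a b" by linarith
  then show ?thesis
  proof cases
    case 1
    then have "Longest a b c" by (simp add: Longest_def)
    then show ?thesis using L1 n bc by blast
  next
    case 2
    then have "Longest b a c" by (simp add: Longest_def Kf_sym)
    then have "PT b a c" using L1 n ac by blast
    then show ?thesis using PT_swap by blast
  next
    case 3
    then have "Longest c a b" by (simp add: Longest_def Kf_sym)
    then have "PT c a b" using L1 n ab by blast
    then show ?thesis using PT_cyc by blast
  qed
qed

theorem lemma5:
  shows "\<exists>C>0. \<forall>a b c. a \<in> hyp_plane \<and> b \<in> hyp_plane \<and> c \<in> hyp_plane \<and> \<not> collinear {a, b, c}
            \<longrightarrow> hyp_area (hyp_triangle a b c) \<ge> C * min 1 ((hyp_height a b c)\<^sup>2)"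
proof (intro exI[of _ "1/32"] conjI allI impI)
  show "(0::real) < 1/32" by simp
  fix a b c assume h: "a \<in> hyp_plane \<and> b \<in> hyp_plane \<and> c \<in> hyp_plane \<and> \<not> collinear {a, b, c}"
  then have "PT a b c" using PT_all by (simp add: disk_iff)
  then show "1/32 * min 1 ((hyp_height a b c)\<^sup>2) \<le> hyp_area (hyp_triangle a b c)"
    by (simp add: PT_def)
qed


end
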